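(* Let $\nu\in\mathcal P_s$ with $\nu(\{0\})=0$, and let $t\ge a>0$ with $\nu(\{a\})=\nu(\{t\})=0$ and $G(t)\neq2G(a)$. Then $$I(1,a,t)=\tfrac12G(t)+\tfrac12H(a)\Psi\big(\tfrac at\big)+\tfrac12G(a),$$ and for all $n\ge2$ $$I(n,a,t)=C_1\Big(\frac{G(t)}2\Big)^{n-1}+G(a)^n\big[C_2n+C_3\big],$$ where $$C_1=I(1,a,t)-\frac{G(a)}{2G(a)-G(t)}\Big[G(a)+H(a)\Psi\big(\tfrac at\big)\Big(1-\frac{G(t)}{2G(a)-G(t)}\Big)\Big],\qquad C_2=\frac{H(a)\Psi(\frac at)}{2G(a)-G(t)},$$ $$C_3=\frac{H(a)\Psi(\frac at)+G(a)}{2G(a)-G(t)}-\frac{2H(a)G(a)\Psi(\frac at)}{(2G(a)-G(t))^2}.$$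
   Context: Fix $\alpha>0$. $\mathcal P_s$ is the set of symmetric Borel probability measures on $\mathbb R$. For $x\in\mathbb R$, $\widetilde\delta_x=\frac12(\delta_x+\delta_{-x})$. For a probability measure $\lambda=\mathcal L(X)$ and $c>0$, $T_c\lambda=\mathcal L(cX)$, and $T_0\lambda=\delta_0$. $\widetilde\pi_{2\alpha}$ is the symmetric Pareto probability measure with density $\alpha|y|^{-2\alpha-1}\mathbf 1_{\{|y|\ge1\}}$. The Kendall convolution $\vartriangle_\alpha$ on $\mathcal P_s$ is defined by $\widetilde\delta_x\vartriangle_\alpha\widetilde\delta_y=T_M\big(\varrho^\alpha\widetilde\pi_{2\alpha}+(1-\varrho^\alpha)\widetilde\delta_1\big)$ where $M=\max(|x|,|y|)$, $m=\min(|x|,|y|)$, $\varrho=m/M$ (and $\varrho=0$ if $M=0$), extended by $(\nu_1\vartriangle_\alpha\nu_2)(A)=\int\int(\widetilde\delta_x\vartriangle_\alpha\widetilde\delta_y)(A)\,\nu_1(dx)\nu_2(dy)$. For $x\in\mathbb R$ and $\mu\in\mathcal P_s$ we write $\delta_x\vartriangle_\alpha\mu:=\widetilde\delta_x\vartriangle_\alpha\mu$. $\Psi(t)=(1-|t|^\alpha)_+$. For the measure $\nu$: $F(t)=\nu((-\infty,t])$, $G(t)=\int_{\mathbb R}\Psi(x/t)\,\nu(dx)$ for $t\neq0$, and for $t>0$, $H(t)=2F(t)-1-G(t)=t^{-\alpha}\int_{[-t,t]}|x|^\alpha\nu(dx)$. The Kendall random walk with step distribution $\nu$ is the Markov chain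 $(X_n)_{n\ge0}$ with $X_0=0$ and transition kernel $\mathbb P(X_{k+1}\in A\mid X_k=x)=(\delta_x\vartriangle_\alpha\nu)(A)$. For $a,t>0$ and $n\ge1$, $I(n,a,t)=\int_{(-\infty,a]}\cdots\int_{(-\infty,a]}\Psi(x_n/t)\,(\delta_{x_{n-1}}\vartriangle_\alpha\nu)(dx_n)\cdots(\delta_{x_1}\vartriangle_\alpha\nu)(dx_2)\,\nu(dx_1)$ ($n$ integrations), i.e. $I(n,a,t)=\mathbb E\big[\Psi(X_n/t)\mathbf 1_{\{X_1\le a,\dots,X_n\le a\}}\big]$. *)

theory Defs
  imports "HOL-Probability.Probability"
begin

definition Psi :: "real \<Rightarrow> real \<Rightarrow> real" where
  "Psi \<alpha> s = max 0 (1 - \<bar>s\<bar> powr \<alpha>)"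

definition sym_prob :: "real measure \<Rightarrow> bool" where
  "sym_prob \<nu> \<longleftrightarrow> prob_space \<nu> \<and> sets \<nu> = sets borel \<and>
     (\<forall>A\<in>sets borel. emeasure \<nu> (uminus ` A) = emeasure \<nu> A)"

definition sym_delta :: "real \<Rightarrow> real measure" where
  "sym_delta x = measure_of UNIV (sets borel)
     (\<lambda>A. ennreal ((indicator A x + indicator A (-x)) / 2))"

definition sym_pareto :: "real \<Rightarrow> real measure" where
  "sym_pareto \<alpha> = density lborel
     (\<lambda>u. ennreal (\<alpha> * \<bar>u\<bar> powr (-2*\<alpha>-1) * indicator {u. \<bar>u\<bar> \<ge> 1} u))"

text \<open>(sym_delta x Kendall-convolved with sym_delta y)(A), i.e.
  T_M(rho^alpha pi_{2alpha} + (1-rho^alpha) sym_delta 1)(A), where T_c lambda (A) = lambda {u. c u \<in> A}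
  and T_0 lambda = delta_0.\<close>
definition kendall_dd :: "real \<Rightarrow> real \<Rightarrow> real \<Rightarrow> real set \<Rightarrow> real" where
  "kendall_dd \<alpha> x y A =
     (let M = max \<bar>x\<bar> \<bar>y\<bar>; m = min \<bar>x\<bar> \<bar>y\<bar>; \<rho> = (if M = 0 then 0 else m / M) in
      if M = 0 then indicator A 0
      else \<rho> powr \<alpha> * measure (sym_pareto \<alpha>) {u. M * u \<in> A}
           + (1 - \<rho> powr \<alpha>) * ((indicator A M + indicator A (-M)) / 2))"

definition kendall_conv :: "real \<Rightarrow> real measure \<Rightarrow> real measure \<Rightarrow> real measure" where
  "kendall_conv \<alpha> \<nu>1 \<nu>2 = measure_of UNIV (sets borel)
     (\<lambda>A. \<integral>\<^sup>+ x. \<integral>\<^sup>+ y. ennreal (kendall_dd \<alpha> x y A) \<partial>\<nu>2 \<partial>\<nu>1)"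

text \<open>Transition kernel delta_x Kendall-convolved with nu := sym_delta x Kendall-convolved with nu.\<close>
definition kendall_kernel :: "real \<Rightarrow> real measure \<Rightarrow> real \<Rightarrow> real measure" where
  "kendall_kernel \<alpha> \<nu> x = kendall_conv \<alpha> (sym_delta x) \<nu>"

definition distF :: "real measure \<Rightarrow> real \<Rightarrow> real" where
  "distF \<nu> t = measure \<nu> {..t}"

definition funG :: "real \<Rightarrow> real measure \<Rightarrow> real \<Rightarrow> real" where
  "funG \<alpha> \<nu> t = (\<integral> x. Psi \<alpha> (x / t) \<partial>\<nu>)"

definition funH :: "real \<Rightarrow> real measure \<Rightarrow> real \<Rightarrow> real" where
  "funH \<alpha> \<nu> t = 2 * distF \<nu> t - 1 - funG \<alpha> \<nu> t"

fun kendall_inner :: "real \<Rightarrow> real measure \<Rightarrow> real \<Rightarrow> real \<Rightarrow> nat \<Rightarrow> real \<Rightarrow> real" where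
  "kendall_inner \<alpha> \<nu> a t 0 x = Psi \<alpha> (x / t)"
| "kendall_inner \<alpha> \<nu> a t (Suc k) x =
     (\<integral> y. indicator {..a} y * kendall_inner \<alpha> \<nu> a t k y \<partial>(kendall_kernel \<alpha> \<nu> x))"

text \<open>I(n,a,t) for n \<ge> 1 (n integrations).\<close>
definition kendall_I :: "real \<Rightarrow> real measure \<Rightarrow> nat \<Rightarrow> real \<Rightarrow> real \<Rightarrow> real" where
  "kendall_I \<alpha> \<nu> n a t = (\<integral> x. indicator {..a} x * kendall_inner \<alpha> \<nu> a t (n - 1) x \<partial>\<nu>)"

end

theory Submission
  imports Defs
begin


lemma pareto_half:
  fixes \<alpha> c \<beta> :: real
  assumes "0 < \<alpha>" "1 \<le> c" "\<beta> \<noteq> 2*\<alpha>"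
  shows "(\<integral>u. indicator {1..c} u *\<^sub>R (\<alpha> * u powr (\<beta>-2*\<alpha>-1)) \<partial>lborel)
     = \<alpha>/(\<beta>-2*\<alpha>) * (c powr (\<beta>-2*\<alpha>) - 1)"
proof -
  let ?F = "\<lambda>u. \<alpha>/(\<beta>-2*\<alpha>) * u powr (\<beta>-2*\<alpha>)"
  have "(\<integral>u. indicator {1..c} u *\<^sub>R (\<alpha> * u powr (\<beta>-2*\<alpha>-1)) \<partial>lborel) = ?F c - ?F 1"
  proof (rule integral_FTC_atLeastAtMost[OF assms(2)])
    fix x assume x: "1 \<le> x" "x \<le> c"
    have "((\<lambda>u. u powr (\<beta>-2*\<alpha>)) has_real_derivative (\<beta>-2*\<alpha>) * x powr (\<beta>-2*\<alpha> - 1)) (at x)"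
      using x by (intro has_real_derivative_powr) auto
    then have "(?F has_real_derivative \<alpha>/(\<beta>-2*\<alpha>) * ((\<beta>-2*\<alpha>) * x powr (\<beta>-2*\<alpha> - 1))) (at x)"
      by (rule DERIV_cmult)
    moreover have "\<alpha>/(\<beta>-2*\<alpha>) * ((\<beta>-2*\<alpha>) * x powr (\<beta>-2*\<alpha> - 1)) = \<alpha> * x powr (\<beta>-2*\<alpha>-1)"
      using assms by (simp add: field_simps)
    ultimately have "(?F has_real_derivative \<alpha> * x powr (\<beta>-2*\<alpha>-1)) (at x)" by simp
    then show "(?F has_vector_derivative \<alpha> * x powr (\<beta>-2*\<alpha>-1)) (at x within {1..c})"
      by (simp add: has_real_derivative_iff_has_vector_derivative[symmetric] has_field_derivative_at_within)
  next
    show "continuous_on {1..c} (\<lambda>u. \<alpha> * u powr (\<beta>-2*\<alpha>-1))"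
      by (intro continuous_intros) auto
  qed
  then show ?thesis by (simp add: right_diff_distrib)
qed

lemma pareto_full:
  fixes \<alpha> c \<beta> :: real
  assumes a: "0 < \<alpha>" "1 \<le> c" "\<beta> \<noteq> 2*\<alpha>"
  shows "(\<integral>u. (\<alpha> * \<bar>u\<bar> powr (-2*\<alpha>-1) * indicator {u. \<bar>u\<bar> \<ge> 1} u) * (indicator {u. \<bar>u\<bar> \<le> c} u * \<bar>u\<bar> powr \<beta>) \<partial>lborel)
     = 2 * (\<alpha>/(\<beta>-2*\<alpha>) * (c powr (\<beta>-2*\<alpha>) - 1))"
proof -
  define h where "h u = indicator {1..c} u *\<^sub>R (\<alpha> * u powr (\<beta>-2*\<alpha>-1))" for u :: real
  have "continuous_on {1..c} (\<lambda>u. \<alpha> * u powr (\<beta>-2*\<alpha>-1))"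
    by (intro continuous_intros) auto
  then have int: "integrable lborel h"
    using borel_integrable_atLeastAtMost'[of 1 c "\<lambda>u. \<alpha> * u powr (\<beta>-2*\<alpha>-1)"]
    unfolding h_def set_integrable_def by auto
  have int2: "integrable lborel (\<lambda>u. h (-u))"
    using lborel_integrable_real_affine[OF int, of "-1" 0] by simp
  have eq: "(\<alpha> * \<bar>u\<bar> powr (-2*\<alpha>-1) * indicator {u. \<bar>u\<bar> \<ge> 1} u) * (indicator {u. \<bar>u\<bar> \<le> c} u * \<bar>u\<bar> powr \<beta>)
      = h u + h (-u)" for u
  proof (cases "1 \<le> \<bar>u\<bar> \<and> \<bar>u\<bar> \<le> c")
    case True
    then have "u \<noteq> 0" by auto
    then have p: "\<bar>u\<bar> powr (-2*\<alpha>-1) * \<bar>u\<bar> powr \<beta> = \<bar>u\<bar> powr (\<beta>-2*\<alpha>-1)"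
      by (simp add: powr_add[symmetric] algebra_simps)
    show ?thesis
    proof (cases "u \<ge> 0")
      case True
      with \<open>1 \<le> \<bar>u\<bar> \<and> \<bar>u\<bar> \<le> c\<close> show ?thesis using p
        by (auto simp: h_def indicator_def)
    next
      case False
      with \<open>1 \<le> \<bar>u\<bar> \<and> \<bar>u\<bar> \<le> c\<close> show ?thesis using p
        by (auto simp: h_def indicator_def)
    qed
  next
    case False
    then show ?thesis by (auto simp: h_def indicator_def)
  qed
  have "(\<integral>u. h (-u) \<partial>lborel) = (\<integral>u. h u \<partial>lborel)"
    using lborel_integral_real_affine[of "-1" h 0] by simp
  then have "(\<integral>u. h u + h (-u) \<partial>lborel) = 2 * (\<integral>u. h u \<partial>lborel)"
    using int int2 by simp
  also have "(\<integral>u. h u \<partial>lborel) = \<alpha>/(\<beta>-2*\<alpha>) * (c powr (\<beta>-2*\<alpha>) - 1)"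
    unfolding h_def by (rule pareto_half[OF a])
  finally show ?thesis unfolding eq .
qed

definition pd :: "real \<Rightarrow> real \<Rightarrow> real" where
  "pd \<alpha> u = \<alpha> * \<bar>u\<bar> powr (-2*\<alpha>-1) * indicator {u. \<bar>u\<bar> \<ge> 1} u"

lemma pd_meas[measurable]: "pd \<alpha> \<in> borel_measurable borel"
  unfolding pd_def by measurable

lemma pareto_eq: "sym_pareto \<alpha> = density lborel (\<lambda>u. ennreal (pd \<alpha> u))"
  unfolding sym_pareto_def pd_def ..

locale kendall =
  fixes \<alpha> :: real and \<nu> :: "real measure"
  assumes alpha_pos: "0 < \<alpha>" and symp: "sym_prob \<nu>"
begin

abbreviation "PI \<equiv> sym_pareto \<alpha>"

lemma pd_nonneg: "0 \<le> pd \<alpha> u"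
  using alpha_pos unfolding pd_def by (auto simp: indicator_def)

lemma sets_PI[measurable_cong]: "sets PI = sets borel"
  unfolding pareto_eq by simp

lemma space_PI[simp]: "space PI = UNIV"
  unfolding pareto_eq by simp

lemma PI_integral:
  assumes [measurable]: "g \<in> borel_measurable borel"
  shows "(\<integral>u. g u \<partial>PI) = (\<integral>u. pd \<alpha> u * g u \<partial>lborel)"
  unfolding pareto_eq
  by (subst integral_density) (auto simp: pd_nonneg)

lemma PI_emeasure:
  assumes [measurable]: "A \<in> sets borel"
  shows "emeasure PI A = (\<integral>\<^sup>+u. ennreal (pd \<alpha> u) * indicator A u \<partial>lborel)"
  unfolding pareto_eq by (subst emeasure_density) auto

lemma PI_UNIV: "emeasure PI UNIV = 1"
proof -
  define f where "f u = indicator {1..} u * u powr (-2*\<alpha>-1)" for u :: real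
  have fm[measurable]: "f \<in> borel_measurable borel" unfolding f_def by measurable
  have f0: "0 \<le> f u" for u unfolding f_def by (auto simp: indicator_def)
  have hi: "((\<lambda>x. x powr (-2*\<alpha>-1)) has_integral -(1 powr (-2*\<alpha>-1+1)) / (-2*\<alpha>-1+1)) {1..}"
    by (rule has_integral_powr_to_inf) (use alpha_pos in auto)
  have "(\<integral>\<^sup>+u. ennreal (f u) \<partial>lborel) = ennreal (-(1 powr (-2*\<alpha>-1+1)) / (-2*\<alpha>-1+1))"
    unfolding f_def by (rule nn_integral_has_integral_lebesgue[OF _ hi]) auto
  also have "-(1 powr (-2*\<alpha>-1+1)) / (-2*\<alpha>-1+1) = 1/(2*\<alpha>)"
    using alpha_pos by simp
  finally have I1: "(\<integral>\<^sup>+u. ennreal (f u) \<partial>lborel) = ennreal (1/(2*\<alpha>))" .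
  have I2: "(\<integral>\<^sup>+u. ennreal (f (-u)) \<partial>lborel) = ennreal (1/(2*\<alpha>))"
    using nn_integral_real_affine[of "\<lambda>u. ennreal (f u)" "-1" 0] I1 by simp
  have pe: "ennreal (pd \<alpha> u) = ennreal \<alpha> * ennreal (f u) + ennreal \<alpha> * ennreal (f (-u))" for u
  proof -
    have "pd \<alpha> u = \<alpha> * f u + \<alpha> * f (-u)"
      unfolding pd_def f_def by (auto simp: indicator_def)
    then show ?thesis using alpha_pos f0[of u] f0[of "-u"]
      by (simp add: ennreal_plus[symmetric] ennreal_mult[symmetric] del: ennreal_plus)
  qed
  have "emeasure PI UNIV = (\<integral>\<^sup>+u. ennreal (pd \<alpha> u) \<partial>lborel)"
    by (subst PI_emeasure) auto
  also have "\<dots> = (\<integral>\<^sup>+u. ennreal \<alpha> * ennreal (f u) + ennreal \<alpha> * ennreal (f (-u)) \<partial>lborel)"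
    by (simp only: pe)
  also have "\<dots> = ennreal \<alpha> * (\<integral>\<^sup>+u. ennreal (f u) \<partial>lborel) + ennreal \<alpha> * (\<integral>\<^sup>+u. ennreal (f (-u)) \<partial>lborel)"
    by (subst nn_integral_add) (auto simp: nn_integral_cmult)
  also have "\<dots> = ennreal \<alpha> * ennreal (1/(2*\<alpha>)) + ennreal \<alpha> * ennreal (1/(2*\<alpha>))"
    by (simp only: I1 I2)
  also have h: "ennreal \<alpha> * ennreal (1/(2*\<alpha>)) = ennreal (1/2)"
    using alpha_pos by (simp add: ennreal_mult[symmetric])
  also have "ennreal (1/2) + ennreal (1/2) = ennreal 1"
    by (subst ennreal_plus[symmetric]) auto
  finally show ?thesis by simp
qed

lemma prob_PI: "prob_space PI"
  by (rule prob_spaceI) (simp add: PI_UNIV)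

lemma PI_distr_uminus: "distr PI borel uminus = PI"
proof (rule measure_eqI)
  show "sets (distr PI borel uminus) = sets PI" by (simp add: sets_PI)
  fix A assume "A \<in> sets (distr PI borel uminus)"
  then have A[measurable]: "A \<in> sets borel" by simp
  have "emeasure (distr PI borel uminus) A = emeasure PI (uminus -` A)"
    by (subst emeasure_distr) auto
  also have "\<dots> = (\<integral>\<^sup>+u. ennreal (pd \<alpha> u) * indicator (uminus -` A) u \<partial>lborel)"
    by (rule PI_emeasure) (use measurable_sets[of uminus borel borel A] A in simp)
  also have "\<dots> = (\<integral>\<^sup>+u. ennreal (pd \<alpha> (-u)) * indicator A (-u) \<partial>lborel)"
    by (intro nn_integral_cong) (auto simp: pd_def indicator_def)
  also have "\<dots> = (\<integral>\<^sup>+u. ennreal (pd \<alpha> u) * indicator A u \<partial>lborel)"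
    using nn_integral_real_affine[of "\<lambda>u. ennreal (pd \<alpha> u) * indicator A u" "-1" 0] by simp
  also have "\<dots> = emeasure PI A" by (rule PI_emeasure[symmetric]) fact
  finally show "emeasure (distr PI borel uminus) A = emeasure PI A" .
qed

lemma PI_sym_integral:
  fixes g :: "real \<Rightarrow> real"
  assumes [measurable]: "g \<in> borel_measurable borel"
  shows "(\<integral>u. g (-u) \<partial>PI) = (\<integral>u. g u \<partial>PI)"
proof -
  have "(\<integral>u. g u \<partial>PI) = (\<integral>u. g u \<partial>distr PI borel uminus)" by (simp add: PI_distr_uminus)
  also have "\<dots> = (\<integral>u. g (-u) \<partial>PI)" by (rule integral_distr) auto
  finally show ?thesis by simp
qed

lemma PI_m0:
  assumes "0 < c"
  shows "measure PI {u. \<bar>u\<bar> \<le> c} = (if 1 \<le> c then 1 - c powr (-2*\<alpha>) else 0)"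
proof -
  have "measure PI {u. \<bar>u\<bar> \<le> c} = (\<integral>u. indicator {u. \<bar>u\<bar> \<le> c} u \<partial>PI)" by simp
  also have "\<dots> = (\<integral>u. pd \<alpha> u * indicator {u. \<bar>u\<bar> \<le> c} u \<partial>lborel)"
    by (rule PI_integral) measurable
  also have "\<dots> = (if 1 \<le> c then 1 - c powr (-2*\<alpha>) else 0)"
  proof (cases "1 \<le> c")
    case True
    have "(\<integral>u. pd \<alpha> u * indicator {u. \<bar>u\<bar> \<le> c} u \<partial>lborel)
       = (\<integral>u. (\<alpha> * \<bar>u\<bar> powr (-2*\<alpha>-1) * indicator {u. \<bar>u\<bar> \<ge> 1} u) * (indicator {u. \<bar>u\<bar> \<le> c} u * \<bar>u\<bar> powr 0) \<partial>lborel)"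
      by (intro Bochner_Integration.integral_cong) (auto simp: pd_def indicator_def)
    also have "\<dots> = 2 * (\<alpha>/(0-2*\<alpha>) * (c powr (0-2*\<alpha>) - 1))"
      by (rule pareto_full) (use alpha_pos True in auto)
    also have "\<dots> = 1 - c powr (-2*\<alpha>)" using alpha_pos by (simp add: field_simps)
    finally show ?thesis using True by simp
  next
    case False
    then have "(\<lambda>u. pd \<alpha> u * indicator {u. \<bar>u\<bar> \<le> c} u) = (\<lambda>u. 0)"
      by (auto simp: pd_def indicator_def)
    then show ?thesis using False by simp
  qed
  finally show ?thesis .
qed

lemma PI_m1:
  assumes "0 < c"
  shows "(\<integral>u. indicator {u. \<bar>u\<bar> \<le> c} u * \<bar>u\<bar> powr \<alpha> \<partial>PI) = (if 1 \<le> c then 2 * (1 - c powr (-\<alpha>)) else 0)"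
proof -
  have "(\<integral>u. indicator {u. \<bar>u\<bar> \<le> c} u * \<bar>u\<bar> powr \<alpha> \<partial>PI) = (\<integral>u. pd \<alpha> u * (indicator {u. \<bar>u\<bar> \<le> c} u * \<bar>u\<bar> powr \<alpha>) \<partial>lborel)"
    by (rule PI_integral) measurable
  also have "\<dots> = (if 1 \<le> c then 2 * (1 - c powr (-\<alpha>)) else 0)"
  proof (cases "1 \<le> c")
    case True
    have "(\<integral>u. pd \<alpha> u * (indicator {u. \<bar>u\<bar> \<le> c} u * \<bar>u\<bar> powr \<alpha>) \<partial>lborel)
       = 2 * (\<alpha>/(\<alpha>-2*\<alpha>) * (c powr (\<alpha>-2*\<alpha>) - 1))"
      unfolding pd_def by (rule pareto_full) (use alpha_pos True in auto)
    also have "\<dots> = 2 * (1 - c powr (-\<alpha>))" using alpha_pos by (simp add: field_simps)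
    finally show ?thesis using True by simp
  next
    case False
    then have "(\<lambda>u. pd \<alpha> u * (indicator {u. \<bar>u\<bar> \<le> c} u * \<bar>u\<bar> powr \<alpha>)) = (\<lambda>u. 0)"
      by (auto simp: pd_def indicator_def)
    then show ?thesis using False by simp
  qed
  finally show ?thesis .
qed


lemma prob_nu: "prob_space \<nu>" using symp unfolding sym_prob_def by auto

lemma sets_nu[measurable_cong]: "sets \<nu> = sets borel" using symp unfolding sym_prob_def by auto

lemma space_nu[simp]: "space \<nu> = UNIV"
  using sets_eq_imp_space_eq[OF sets_nu] by simp

lemma nu_distr_uminus: "distr \<nu> borel uminus = \<nu>"
proof (rule measure_eqI)
  show "sets (distr \<nu> borel uminus) = sets \<nu>" by (simp add: sets_nu)
  fix A assume "A \<in> sets (distr \<nu> borel uminus)"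
  then have A[measurable]: "A \<in> sets borel" by simp
  have im: "uminus -` A = uminus ` A" for A :: "real set"
  proof (rule set_eqI)
    fix x :: real
    show "x \<in> uminus -` A \<longleftrightarrow> x \<in> uminus ` A"
      by (auto simp: image_iff intro!: bexI[of _ "-x"])
  qed
  have "emeasure (distr \<nu> borel uminus) A = emeasure \<nu> (uminus -` A)"
    by (subst emeasure_distr) (auto simp: sets_nu)
  also have "\<dots> = emeasure \<nu> A"
    using symp A unfolding sym_prob_def im by auto
  finally show "emeasure (distr \<nu> borel uminus) A = emeasure \<nu> A" .
qed

lemma nu_sym_integral:
  fixes g :: "real \<Rightarrow> real"
  assumes [measurable]: "g \<in> borel_measurable borel"
  shows "(\<integral>u. g (-u) \<partial>\<nu>) = (\<integral>u. g u \<partial>\<nu>)"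
proof -
  have "(\<integral>u. g u \<partial>\<nu>) = (\<integral>u. g u \<partial>distr \<nu> borel uminus)" by (simp add: nu_distr_uminus)
  also have "\<dots> = (\<integral>u. g (-u) \<partial>\<nu>)" by (rule integral_distr) (auto simp: sets_nu)
  finally show ?thesis by simp
qed

end

definition U :: "real measure" where "U = uniform_measure lborel {0..1}"

lemma prob_U: "prob_space U"
  unfolding U_def by (rule prob_space_uniform_measure) auto

lemma sets_U[measurable_cong]: "sets U = sets borel"
  unfolding U_def by simp

lemma space_U[simp]: "space U = UNIV"
  unfolding U_def by simp

lemma U_lessThan:
  assumes "0 \<le> d" "d \<le> 1" shows "measure U {..<d} = d"
proof -
  have "measure U {..<d} = measure lborel ({0..1} \<inter> {..<d}) / measure lborel {0..1::real}"
    unfolding U_def by (rule measure_uniform_measure) auto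
  also have "{0..1} \<inter> {..<d} = {0..<d}" using assms by auto
  finally show ?thesis using assms by simp
qed

lemma U_UNIV: "measure U UNIV = 1"
  using prob_space.prob_space[OF prob_U] by simp

lemma U_int_ind: "0 \<le> d \<Longrightarrow> d \<le> 1 \<Longrightarrow> (\<integral>v. A * indicator {..<d} v \<partial>U) = A * d"
  by (simp add: U_lessThan)

lemma U_integrable_ind: "integrable U (\<lambda>v. A * indicator {..<d} v :: real)"
proof -
  interpret prob_space U by (rule prob_U)
  show ?thesis by (intro integrable_mult_right integrable_real_indicator) (auto simp: less_top[symmetric])
qed

lemma U_step2:
  assumes "0 \<le> d" "d \<le> 1"
  shows "(\<integral>v. (if v < d then A else B) \<partial>U) = d * A + (1-d) * (B::real)"
proof -
  interpret prob_space U by (rule prob_U)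
  have "(\<lambda>v. if v < d then A else B) = (\<lambda>v. B + (A - B) * indicator {..<d} v)"
    by (auto simp: indicator_def)
  then have "(\<integral>v. (if v < d then A else B) \<partial>U) = (\<integral>v. B + (A - B) * indicator {..<d} v \<partial>U)" by simp
  also have "\<dots> = B + (A - B) * d"
    using U_integrable_ind[of "A-B" d] assms by (simp add: U_int_ind U_UNIV U_lessThan)
  finally show ?thesis by (simp add: algebra_simps)
qed

lemma U_step3:
  assumes "0 \<le> c" "c \<le> 1"
  shows "(\<integral>v. (if v < c then A else if v < (1+c)/2 then B else C) \<partial>U) = c * A + (1-c)/2 * B + (1-c)/2 * (C::real)"
proof -
  interpret prob_space U by (rule prob_U)
  have "(\<lambda>v. if v < c then A else if v < (1+c)/2 then B else C) =
     (\<lambda>v. C + ((B - C) * indicator {..<(1+c)/2} v + (A - B) * indicator {..<c} v))"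
    using assms by (auto simp: indicator_def)
  then have "(\<integral>v. (if v < c then A else if v < (1+c)/2 then B else C) \<partial>U)
     = (\<integral>v. C + ((B - C) * indicator {..<(1+c)/2} v + (A - B) * indicator {..<c} v) \<partial>U)" by simp
  also have "\<dots> = C + ((B - C) * ((1+c)/2) + (A - B) * c)"
    using U_integrable_ind[of "A-B" c] U_integrable_ind[of "B-C" "(1+c)/2"] assms
    by (simp add: U_int_ind U_UNIV U_lessThan)
  finally show ?thesis by (simp add: field_simps)
qed


definition MM :: "real \<Rightarrow> real \<Rightarrow> real" where "MM x y = max \<bar>x\<bar> \<bar>y\<bar>"
definition mm :: "real \<Rightarrow> real \<Rightarrow> real" where "mm x y = min \<bar>x\<bar> \<bar>y\<bar>"
definition cc :: "real \<Rightarrow> real \<Rightarrow> real \<Rightarrow> real" where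
  "cc \<alpha> x y = (if MM x y = 0 then 0 else mm x y / MM x y) powr \<alpha>"
definition TT :: "real \<Rightarrow> real \<Rightarrow> real \<times> real \<times> real \<Rightarrow> real" where
  "TT \<alpha> x w = MM x (fst w) * (if snd (snd w) < cc \<alpha> x (fst w) then fst (snd w)
      else if snd (snd w) < (1 + cc \<alpha> x (fst w))/2 then 1 else -1)"

lemma MM_meas[measurable]: "(\<lambda>y. MM x y) \<in> borel_measurable borel"
  unfolding MM_def by measurable
lemma mm_meas[measurable]: "(\<lambda>y. mm x y) \<in> borel_measurable borel"
  unfolding mm_def by measurable
lemma cc_meas[measurable]: "(\<lambda>y. cc \<alpha> x y) \<in> borel_measurable borel"
  unfolding cc_def by measurable

lemma cc_bounds: "0 \<le> \<alpha> \<Longrightarrow> 0 \<le> cc \<alpha> x y \<and> cc \<alpha> x y \<le> 1"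
  unfolding cc_def MM_def mm_def by (auto intro!: powr_le1 simp: divide_le_eq_1)

context kendall
begin

definition K :: "real \<Rightarrow> real measure" where
  "K x = distr (\<nu> \<Otimes>\<^sub>M (PI \<Otimes>\<^sub>M U)) borel (TT \<alpha> x)"

lemma TT_meas[measurable]: "TT \<alpha> x \<in> borel_measurable (\<nu> \<Otimes>\<^sub>M (PI \<Otimes>\<^sub>M U))"
  unfolding TT_def by measurable

lemma prob_prod: "prob_space (\<nu> \<Otimes>\<^sub>M (PI \<Otimes>\<^sub>M U))"
  by (intro prob_space_pair prob_nu prob_PI prob_U)

lemma prob_K: "prob_space (K x)"
  unfolding K_def by (intro prob_space.prob_space_distr prob_prod) simp

lemma sets_K[measurable_cong]: "sets (K x) = sets borel"
  unfolding K_def by simp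

lemma space_K[simp]: "space (K x) = UNIV"
  unfolding K_def by simp

definition Phi :: "(real \<Rightarrow> real) \<Rightarrow> real \<Rightarrow> real \<Rightarrow> real" where
  "Phi f x y = cc \<alpha> x y * (\<integral>u. f (MM x y * u) \<partial>PI) + (1 - cc \<alpha> x y)/2 * (f (MM x y) + f (- MM x y))"

lemma K_int:
  assumes f[measurable]: "f \<in> borel_measurable borel" and B: "\<And>z. \<bar>f z\<bar> \<le> B"
  shows "(\<integral>z. f z \<partial>K x) = (\<integral>y. Phi f x y \<partial>\<nu>)"
proof -
  interpret P1: pair_prob_space PI U
    using prob_PI prob_U by (simp add: pair_prob_space_def pair_sigma_finite_def prob_space_imp_sigma_finite)
  interpret P2: pair_prob_space \<nu> "PI \<Otimes>\<^sub>M U"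
    using prob_nu prob_space_pair[OF prob_PI prob_U]
    by (simp add: pair_prob_space_def pair_sigma_finite_def prob_space_imp_sigma_finite)
  have int: "integrable (\<nu> \<Otimes>\<^sub>M (PI \<Otimes>\<^sub>M U)) (\<lambda>w. f (TT \<alpha> x w))"
    by (rule P2.integrable_const_bound[where B=B]) (auto simp: B)
  have int2: "integrable (PI \<Otimes>\<^sub>M U) (\<lambda>w. f (TT \<alpha> x (y, w)))" for y
    by (rule P1.integrable_const_bound[where B=B]) (auto simp: B)
  have "(\<integral>z. f z \<partial>K x) = (\<integral>w. f (TT \<alpha> x w) \<partial>(\<nu> \<Otimes>\<^sub>M (PI \<Otimes>\<^sub>M U)))"
    unfolding K_def by (rule integral_distr) auto
  also have "\<dots> = (\<integral>y. (\<integral>w. f (TT \<alpha> x (y, w)) \<partial>(PI \<Otimes>\<^sub>M U)) \<partial>\<nu>)"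
    using P2.integral_fst'[OF int] by simp
  also have "\<dots> = (\<integral>y. Phi f x y \<partial>\<nu>)"
  proof (rule Bochner_Integration.integral_cong[OF refl])
    fix y
    let ?c = "cc \<alpha> x y" and ?M = "MM x y"
    have c: "0 \<le> ?c" "?c \<le> 1" using cc_bounds[of \<alpha> x y] alpha_pos by auto
    have "(\<integral>w. f (TT \<alpha> x (y, w)) \<partial>(PI \<Otimes>\<^sub>M U)) = (\<integral>u. (\<integral>v. f (TT \<alpha> x (y, (u, v))) \<partial>U) \<partial>PI)"
      using P1.integral_fst'[OF int2[of y]] by simp
    also have "\<dots> = (\<integral>u. ?c * f (?M * u) + ((1 - ?c)/2 * f ?M + (1 - ?c)/2 * f (- ?M)) \<partial>PI)"
    proof (rule Bochner_Integration.integral_cong[OF refl])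
      fix u
      have "(\<lambda>v. f (TT \<alpha> x (y, (u, v)))) = (\<lambda>v. if v < ?c then f (?M * u) else if v < (1 + ?c)/2 then f ?M else f (- ?M))"
        by (auto simp: TT_def)
      then show "(\<integral>v. f (TT \<alpha> x (y, (u, v))) \<partial>U) = ?c * f (?M * u) + ((1 - ?c)/2 * f ?M + (1 - ?c)/2 * f (- ?M))"
        using U_step3[OF c] by (simp add: algebra_simps)
    qed
    also have "\<dots> = ?c * (\<integral>u. f (?M * u) \<partial>PI) + ((1 - ?c)/2 * f ?M + (1 - ?c)/2 * f (- ?M))"
    proof -
      have "integrable PI (\<lambda>u. f (?M * u))"
        by (rule P1.M1.integrable_const_bound[where B=B]) (auto simp: B)
      then show ?thesis using P1.M1.prob_space by simp
    qed
    finally show "(\<integral>w. f (TT \<alpha> x (y, w)) \<partial>(PI \<Otimes>\<^sub>M U)) = Phi f x y"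
      unfolding Phi_def by (simp add: field_simps)
  qed
  finally show ?thesis .
qed


lemma kdd_Phi:
  assumes [measurable]: "A \<in> sets borel"
  shows "kendall_dd \<alpha> x y A = Phi (indicator A) x y"
proof -
  have e: "(\<integral>u. indicator A (MM x y * u) \<partial>PI) = measure PI {u. MM x y * u \<in> A}"
  proof -
    have "(\<lambda>u. indicator A (MM x y * u) :: real) = indicator {u. MM x y * u \<in> A}"
      by (auto simp: indicator_def)
    then show ?thesis by simp
  qed
  show ?thesis
  proof (cases "MM x y = 0")
    case True
    then show ?thesis using alpha_pos
      unfolding kendall_dd_def Phi_def cc_def Let_def by (simp add: MM_def[symmetric])
  next
    case False
    then show ?thesis
      unfolding kendall_dd_def Phi_def cc_def Let_def e
      by (simp add: MM_def[symmetric] mm_def[symmetric] field_simps)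
  qed
qed

lemma kdd_abs: "\<bar>x'\<bar> = \<bar>x\<bar> \<Longrightarrow> kendall_dd \<alpha> x' y A = kendall_dd \<alpha> x y A"
  unfolding kendall_dd_def by simp

lemma Phi_meas[measurable]:
  assumes [measurable]: "f \<in> borel_measurable borel"
  shows "(\<lambda>y. Phi f x y) \<in> borel_measurable borel"
proof -
  have "(\<lambda>(y,u). f (MM x y * u)) \<in> borel_measurable (borel \<Otimes>\<^sub>M PI)" by measurable
  then have [measurable]: "(\<lambda>y. \<integral>u. f (MM x y * u) \<partial>PI) \<in> borel_measurable borel"
    using sigma_finite_measure.borel_measurable_lebesgue_integral[OF prob_space_imp_sigma_finite[OF prob_PI],
        of "\<lambda>y u. f (MM x y * u)" borel] by simp
  have [measurable]: "(\<lambda>y. f (- MM x y)) \<in> borel_measurable borel"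
    using measurable_comp[OF borel_measurable_uminus[OF MM_meas] assms] by (simp add: comp_def)
  show ?thesis unfolding Phi_def by measurable
qed

lemma emeasure_K:
  assumes A[measurable]: "A \<in> sets borel"
  shows "emeasure (K x) A = (\<integral>\<^sup>+y. ennreal (kendall_dd \<alpha> x y A) \<partial>\<nu>)"
proof -
  interpret Kp: prob_space "K x" by (rule prob_K)
  interpret N: prob_space \<nu> by (rule prob_nu)
  interpret PIp: prob_space PI by (rule prob_PI)
  have kb: "0 \<le> kendall_dd \<alpha> x y A \<and> kendall_dd \<alpha> x y A \<le> 1" for y
  proof -
    have c: "0 \<le> cc \<alpha> x y" "cc \<alpha> x y \<le> 1" using cc_bounds[of \<alpha> x y] alpha_pos by auto
    have i: "0 \<le> (\<integral>u. (indicator A (MM x y * u) :: real) \<partial>PI)" "(\<integral>u. (indicator A (MM x y * u) :: real) \<partial>PI) \<le> 1"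
    proof -
      have "(\<lambda>u. indicator A (MM x y * u) :: real) = indicator {u. MM x y * u \<in> A}"
        by (auto simp: indicator_def)
      then have "(\<integral>u. indicator A (MM x y * u) \<partial>PI) = measure PI {u. MM x y * u \<in> A}"
        by simp
      then show "0 \<le> (\<integral>u. (indicator A (MM x y * u) :: real) \<partial>PI)" "(\<integral>u. (indicator A (MM x y * u) :: real) \<partial>PI) \<le> 1"
        using PIp.prob_le_1 by simp_all
    qed
    have j: "0 \<le> (indicator A (MM x y) + indicator A (- MM x y) :: real)" "indicator A (MM x y) + indicator A (- MM x y) \<le> (2::real)"
      by (auto simp: indicator_def)
    have "0 \<le> Phi (indicator A) x y"
      unfolding Phi_def using c i j by (intro add_nonneg_nonneg mult_nonneg_nonneg) auto
    moreover have "Phi (indicator A) x y \<le> cc \<alpha> x y * 1 + (1 - cc \<alpha> x y)/2 * 2"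
      unfolding Phi_def using c i j by (intro add_mono mult_left_mono) auto
    moreover have "cc \<alpha> x y * 1 + (1 - cc \<alpha> x y)/2 * 2 = 1" by (simp add: field_simps)
    ultimately show ?thesis using kdd_Phi[OF A, of x y] by linarith
  qed
  have meas: "(\<lambda>y. kendall_dd \<alpha> x y A) \<in> borel_measurable borel"
    by (subst kdd_Phi[OF A, abs_def]) measurable
  have int: "integrable \<nu> (\<lambda>y. kendall_dd \<alpha> x y A)"
    by (rule N.integrable_const_bound[where B=1]) (use kb meas in auto)
  have "emeasure (K x) A = ennreal (measure (K x) A)" by (simp add: Kp.emeasure_eq_measure)
  also have "measure (K x) A = (\<integral>z. indicator A z \<partial>K x)" by simp
  also have "\<dots> = (\<integral>y. Phi (indicator A) x y \<partial>\<nu>)"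
    by (rule K_int[where B=1]) (auto simp: indicator_def)
  also have "\<dots> = (\<integral>y. kendall_dd \<alpha> x y A \<partial>\<nu>)" by (simp add: kdd_Phi[OF A])
  also have "ennreal \<dots> = (\<integral>\<^sup>+y. ennreal (kendall_dd \<alpha> x y A) \<partial>\<nu>)"
    by (rule nn_integral_eq_integral[symmetric]) (use int kb in auto)
  finally show ?thesis .
qed

definition SD :: "real \<Rightarrow> real measure" where
  "SD x = distr U borel (\<lambda>v. if v < 1/2 then x else -x)"

lemma sym_delta_SD: "sym_delta x = SD x"
proof -
  interpret Sp: prob_space "SD x" unfolding SD_def by (intro prob_space.prob_space_distr prob_U) simp
  have sp: "space (SD x) = UNIV" "sets (SD x) = sets borel" unfolding SD_def by simp_all
  have "sym_delta x = measure_of UNIV (sets borel) (emeasure (SD x))"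
    unfolding sym_delta_def
  proof (rule measure_of_eq)
    fix A :: "real set" assume "A \<in> sigma_sets UNIV (sets borel)"
    then have A[measurable]: "A \<in> sets borel" using sets.sigma_sets_eq[of "borel :: real measure"] by simp
    have "measure (SD x) A = (\<integral>z. indicator A z \<partial>SD x)" by (simp add: sp)
    also have "\<dots> = (\<integral>v. indicator A (if v < 1/2 then x else -x) \<partial>U)"
      unfolding SD_def by (rule integral_distr) auto
    also have "\<dots> = (\<integral>v. (if v < 1/2 then indicator A x else indicator A (-x)) \<partial>U)"
      by (intro Bochner_Integration.integral_cong) auto
    also have "\<dots> = (indicator A x + indicator A (-x))/2"
      by (subst U_step2) auto
    finally show "ennreal ((indicator A x + indicator A (- x)) / 2) = emeasure (SD x) A"
      by (simp add: Sp.emeasure_eq_measure)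
  qed auto
  also have "\<dots> = SD x" using measure_of_of_measure[of "SD x"] sp by simp
  finally show ?thesis .
qed

lemma kernel_K: "kendall_kernel \<alpha> \<nu> x = K x"
proof -
  interpret Sp: prob_space "SD x" unfolding SD_def by (intro prob_space.prob_space_distr prob_U) simp
  have spK: "space (K x) = UNIV" "sets (K x) = sets borel" by (simp_all add: sets_K)
  have "kendall_kernel \<alpha> \<nu> x = measure_of UNIV (sets borel) (emeasure (K x))"
    unfolding kendall_kernel_def kendall_conv_def
  proof (rule measure_of_eq)
    fix A :: "real set" assume "A \<in> sigma_sets UNIV (sets borel)"
    then have A[measurable]: "A \<in> sets borel" using sets.sigma_sets_eq[of "borel :: real measure"] by simp
    define \<Phi> where "\<Phi> x' = (\<integral>\<^sup>+y. ennreal (kendall_dd \<alpha> x' y A) \<partial>\<nu>)" for x'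
    have ae: "AE x' in SD x. \<Phi> x' = \<Phi> x"
    proof -
      have "AE x' in SD x. \<bar>x'\<bar> = \<bar>x\<bar>"
        unfolding SD_def by (subst AE_distr_iff) auto
      then show ?thesis
      proof eventually_elim
        case (elim x')
        then show ?case unfolding \<Phi>_def using kdd_abs[of x' x] by simp
      qed
    qed
    have "(\<integral>\<^sup>+x'. \<Phi> x' \<partial>sym_delta x) = (\<integral>\<^sup>+x'. \<Phi> x \<partial>SD x)"
      unfolding sym_delta_SD by (rule nn_integral_cong_AE[OF ae])
    also have "\<dots> = \<Phi> x" using Sp.emeasure_space_1 by simp
    also have "\<dots> = emeasure (K x) A" unfolding \<Phi>_def by (rule emeasure_K[symmetric]) fact
    finally show "(\<integral>\<^sup>+x'. \<integral>\<^sup>+y. ennreal (kendall_dd \<alpha> x' y A) \<partial>\<nu> \<partial>sym_delta x) = emeasure (K x) A"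
      unfolding \<Phi>_def .
  qed auto
  also have "\<dots> = K x" using measure_of_of_measure[of "K x"] spK by simp
  finally show ?thesis .
qed

end




fun cf :: "real \<Rightarrow> real \<Rightarrow> real \<Rightarrow> real \<Rightarrow> nat \<Rightarrow> real \<times> real \<times> real" where
  "cf Gt Ga Ha P 0 = (1, 0, 0)"
| "cf Gt Ga Ha P (Suc k) = (case cf Gt Ga Ha P k of (p, q, r) \<Rightarrow>
     (Gt/2 * p, (P/2 * p + q) * Ga, (P/2 * p + q) * Ha + ((1-P)/2 * p + r) * Ga))"

lemma cf_closed0:
  fixes b d :: real
  assumes D: "d \<noteq> 0"
  shows "cf (2*b) (b+d) Ha P k = (b^k, P*(b+d)*((b+d)^k - b^k)/(2*d),
     Ha*P/(2*d) * real k * (b+d)^k +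
     (2/(2*d)) * (Ha*P*(b+d)/(2*d) - (P*Ha + (1-P)*(b+d))/2) * (b^k - (b+d)^k))"
proof (induction k)
  case 0
  then show ?case by simp
next
  case (Suc k)
  show ?case unfolding cf.simps Suc.IH prod.case
    using D by (simp add: field_simps)
qed

lemma aux_alg0:
  fixes Ga d Ha P A B k :: real
  assumes D: "d \<noteq> 0"
  shows "B/2 * (2*(Ga-d)) + (P/2 * B + P*Ga*(A - B)/(2*d)) * (Ga + Ha) +
     ((1-P)/2 * B + (Ha*P/(2*d) * k * A +
     (2/(2*d)) * (Ha*P*Ga/(2*d) - (P*Ha + (1-P)*Ga)/2) * (B - A))) * Ga
   = ((2*(Ga-d)) / 2 + Ha * P / 2 + Ga / 2 - Ga / (2*d) * (Ga + Ha * P * (1 - (2*(Ga-d)) / (2*d)))) * B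
     + Ga * A * (Ha * P / (2*d) * (k+1) + ((Ha * P + Ga) / (2*d) - 2 * Ha * Ga * P / (2*d)^2))"
  using D by (simp add: field_simps power2_eq_square)

lemma final_alg:
  assumes D: "2*Ga - Gt \<noteq> 0" and n: "2 \<le> n"
    and cfe: "cf Gt Ga Ha P (n-1) = (p, q, r)"
  shows "p/2 * Gt + (P/2 * p + q) * (Ga + Ha) + ((1-P)/2 * p + r) * Ga =
     (let I1 = Gt / 2 + Ha * P / 2 + Ga / 2; D = 2 * Ga - Gt;
                C1 = I1 - Ga / D * (Ga + Ha * P * (1 - Gt / D));
                C2 = Ha * P / D;
                C3 = (Ha * P + Ga) / D - 2 * Ha * Ga * P / D^2
            in C1 * (Gt / 2) ^ (n - 1) + Ga ^ n * (C2 * real n + C3))"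
proof -
  obtain m where m: "n = Suc m" using n by (cases n) auto
  define b where "b = Gt/2"
  define d where "d = Ga - b"
  have Gt: "Gt = 2*b" unfolding b_def by simp
  have Ga: "Ga = b + d" unfolding d_def by simp
  have d: "d \<noteq> 0" using D unfolding d_def b_def by simp
  have Dd: "2 * Ga - Gt = 2 * d" unfolding Ga Gt by simp
  have "cf (2*b) (b+d) Ha P m = (p, q, r)" using cfe m unfolding Gt Ga by simp
  then have pqr: "p = b^m" "q = P*(b+d)*((b+d)^m - b^m)/(2*d)"
     "r = Ha*P/(2*d) * real m * (b+d)^m +
     (2/(2*d)) * (Ha*P*(b+d)/(2*d) - (P*Ha + (1-P)*(b+d))/2) * (b^m - (b+d)^m)"
    using cf_closed0[OF d, of b Ha P m] by auto
  have e2: "b = (b+d) - d" by simp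
  have "p/2 * Gt + (P/2 * p + q) * (Ga + Ha) + ((1-P)/2 * p + r) * Ga =
     ((2*((b+d)-d)) / 2 + Ha * P / 2 + (b+d) / 2 - (b+d) / (2*d) * ((b+d) + Ha * P * (1 - (2*((b+d)-d)) / (2*d)))) * b^m
     + (b+d) * (b+d)^m * (Ha * P / (2*d) * (real m+1) + ((Ha * P + (b+d)) / (2*d) - 2 * Ha * (b+d) * P / (2*d)^2))"
    unfolding pqr Gt Ga
    using aux_alg0[OF d, where Ga="b+d" and Ha=Ha and P=P and A="(b+d)^m" and B="b^m" and k="real m"]
    by simp
  then show ?thesis unfolding Let_def Dd m by (simp add: Ga Gt)
qed




lemma Psi_eq:
  assumes "0 < s" "0 < \<alpha>"
  shows "Psi \<alpha> (z/s) = (if \<bar>z\<bar> \<le> s then 1 - (\<bar>z\<bar>/s) powr \<alpha> else 0)"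
proof -
  have a: "\<bar>z/s\<bar> = \<bar>z\<bar>/s" using assms by simp
  show ?thesis
  proof (cases "\<bar>z\<bar> \<le> s")
    case True
    then have "\<bar>z\<bar>/s \<le> 1" using assms by simp
    then have "(\<bar>z\<bar>/s) powr \<alpha> \<le> 1" using assms by (intro powr_le1) auto
    then show ?thesis using True unfolding Psi_def a by simp
  next
    case False
    then have "\<bar>z\<bar>/s > 1" using assms by simp
    then have "(\<bar>z\<bar>/s) powr \<alpha> > 1" using assms by simp
    then show ?thesis using False unfolding Psi_def a by simp
  qed
qed

lemma Psi_bounds: "0 \<le> Psi \<alpha> z" "Psi \<alpha> z \<le> 1"
  unfolding Psi_def by auto

lemma Psi_abs: "Psi \<alpha> (z/s) = Psi \<alpha> (\<bar>z\<bar>/s)"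
  unfolding Psi_def by (simp add: abs_divide)

lemma Psi_meas[measurable]: "(\<lambda>z. Psi \<alpha> (z/s)) \<in> borel_measurable borel"
  unfolding Psi_def by measurable

context kendall
begin

lemma PI_psi:
  assumes M: "0 < M" and s: "0 < s"
  shows "(\<integral>u. Psi \<alpha> (M*u/s) \<partial>PI) = (if M \<le> s then (1 - (M/s) powr \<alpha>)^2 else 0)"
proof -
  interpret PIp: prob_space PI by (rule prob_PI)
  define c0 where "c0 = s/M"
  define w where "w = (M/s) powr \<alpha>"
  have c0: "0 < c0" using M s unfolding c0_def by simp
  have pt: "Psi \<alpha> (M*u/s) = indicator {u. \<bar>u\<bar> \<le> c0} u - w * (indicator {u. \<bar>u\<bar> \<le> c0} u * \<bar>u\<bar> powr \<alpha>)" for u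
  proof -
    have "(\<bar>M*u\<bar>/s) powr \<alpha> = w * \<bar>u\<bar> powr \<alpha>"
      unfolding w_def using M s by (simp add: abs_mult powr_mult[symmetric])
    moreover have "\<bar>M*u\<bar> \<le> s \<longleftrightarrow> \<bar>u\<bar> \<le> c0"
      unfolding c0_def using M s by (simp add: abs_mult field_simps)
    ultimately show ?thesis using Psi_eq[OF s alpha_pos, of "M*u"] by (auto simp: indicator_def)
  qed
  have i1: "integrable PI (\<lambda>u. indicator {u. \<bar>u\<bar> \<le> c0} u :: real)"
    by (rule PIp.integrable_const_bound[where B=1]) (auto simp: indicator_def)
  have i2: "integrable PI (\<lambda>u. indicator {u. \<bar>u\<bar> \<le> c0} u * \<bar>u\<bar> powr \<alpha>)"
  proof (rule PIp.integrable_const_bound[where B="c0 powr \<alpha>"])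
    show "AE x in PI. norm (indicator {u. \<bar>u\<bar> \<le> c0} x * \<bar>x\<bar> powr \<alpha>) \<le> c0 powr \<alpha>"
      using alpha_pos by (auto simp: indicator_def intro!: powr_mono2)
  qed measurable
  have "(\<integral>u. Psi \<alpha> (M*u/s) \<partial>PI) = measure PI {u. \<bar>u\<bar> \<le> c0} - w * (\<integral>u. indicator {u. \<bar>u\<bar> \<le> c0} u * \<bar>u\<bar> powr \<alpha> \<partial>PI)"
    unfolding pt using i1 i2 by simp
  also have "\<dots> = (if 1 \<le> c0 then 1 - c0 powr (-2*\<alpha>) else 0) - w * (if 1 \<le> c0 then 2 * (1 - c0 powr (-\<alpha>)) else 0)"
    using PI_m0[OF c0] PI_m1[OF c0] by simp
  also have "\<dots> = (if M \<le> s then (1 - (M/s) powr \<alpha>)^2 else 0)"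
  proof -
    have e1: "c0 powr (-\<alpha>) = w" unfolding c0_def w_def using M s
      by (simp add: powr_minus_divide powr_divide)
    have e2: "c0 powr (-2*\<alpha>) = w^2"
      using powr_add[of c0 "-\<alpha>" "-\<alpha>"] e1 by (simp add: power2_eq_square)
    have "1 \<le> c0 \<longleftrightarrow> M \<le> s" unfolding c0_def using M s by (simp add: field_simps)
    then show ?thesis using e1 e2 unfolding w_def[symmetric] by (simp add: power2_eq_square algebra_simps)
  qed
  finally show ?thesis .
qed

lemma PI_chi:
  assumes M: "0 < M" and a: "0 < a"
  shows "(\<integral>u. indicator {-a..a} (M*u) \<partial>PI) = (if M \<le> a then 1 - (M/a) powr (2*\<alpha>) else 0)"
proof -
  define c0 where "c0 = a/M"
  have c0: "0 < c0" using M a unfolding c0_def by simp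
  have "(\<lambda>u. indicator {-a..a} (M*u) :: real) = indicator {u. \<bar>u\<bar> \<le> c0}"
  proof (rule ext)
    fix u
    have "M*u \<in> {-a..a} \<longleftrightarrow> \<bar>M*u\<bar> \<le> a" by (auto simp: abs_le_iff)
    also have "\<dots> \<longleftrightarrow> \<bar>u\<bar> \<le> c0" unfolding c0_def using M
      by (simp add: abs_mult pos_le_divide_eq mult.commute)
    finally show "(indicator {-a..a} (M*u) :: real) = indicator {u. \<bar>u\<bar> \<le> c0} u"
      by (simp add: indicator_def)
  qed
  then have "(\<integral>u. indicator {-a..a} (M*u) \<partial>PI) = measure PI {u. \<bar>u\<bar> \<le> c0}" by simp
  also have "\<dots> = (if 1 \<le> c0 then 1 - c0 powr (-2*\<alpha>) else 0)" by (rule PI_m0[OF c0])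
  also have "\<dots> = (if M \<le> a then 1 - (M/a) powr (2*\<alpha>) else 0)"
  proof -
    have e: "c0 powr (-2*\<alpha>) = (M/a) powr (2*\<alpha>)" unfolding c0_def using M a
      by (simp add: powr_minus_divide powr_divide)
    have "1 \<le> c0 \<longleftrightarrow> M \<le> a" unfolding c0_def using M a by (simp add: field_simps)
    then show ?thesis using e by simp
  qed
  finally show ?thesis .
qed


lemma Psi_zero[simp]: "0 < \<alpha> \<Longrightarrow> Psi \<alpha> 0 = 1"
  unfolding Psi_def by simp

lemma Phi_psi:
  assumes s: "0 < s"
  shows "Phi (\<lambda>z. Psi \<alpha> (z/s)) x y = Psi \<alpha> (x/s) * Psi \<alpha> (y/s)"
proof -
  define M where "M = MM x y"
  define m where "m = mm x y"
  have mM: "0 \<le> m" "m \<le> M" unfolding M_def m_def MM_def mm_def by auto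
  have xy: "Psi \<alpha> (x/s) * Psi \<alpha> (y/s) = Psi \<alpha> (M/s) * Psi \<alpha> (m/s)"
    unfolding M_def m_def MM_def mm_def
    by (subst (1 2) Psi_abs) (auto simp: max_def min_def)
  have sym: "Psi \<alpha> (- M/s) = Psi \<alpha> (M/s)" by (subst Psi_abs) (simp add: Psi_abs[symmetric])
  show ?thesis
  proof (cases "M = 0")
    case True
    then have "m = 0" using mM by simp
    then show ?thesis using True xy alpha_pos unfolding Phi_def M_def[symmetric] cc_def by simp
  next
    case False
    then have M: "0 < M" using mM by simp
    define c where "c = (m/M) powr \<alpha>"
    define w where "w = (M/s) powr \<alpha>"
    have cc: "cc \<alpha> x y = c" unfolding cc_def c_def M_def m_def using False M_def by simp
    have cw: "c * w = (m/s) powr \<alpha>"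
      unfolding c_def w_def using M s mM by (simp add: powr_mult[symmetric])
    have "Phi (\<lambda>z. Psi \<alpha> (z/s)) x y = c * (\<integral>u. Psi \<alpha> (M*u/s) \<partial>PI) + (1 - c)/2 * (Psi \<alpha> (M/s) + Psi \<alpha> (- M/s))"
      unfolding Phi_def cc M_def[symmetric] by simp
    also have "\<dots> = Psi \<alpha> (M/s) * Psi \<alpha> (m/s)"
    proof (cases "M \<le> s")
      case True
      have e1: "Psi \<alpha> (M/s) = 1 - w" using Psi_eq[OF s alpha_pos, of M] True M unfolding w_def by simp
      have e2: "Psi \<alpha> (m/s) = 1 - c * w" using Psi_eq[OF s alpha_pos, of m] True mM cw by simp
      show ?thesis unfolding PI_psi[OF M s] sym e1 e2 using True w_def
        by (simp add: power2_eq_square field_simps)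
    next
      case False
      have e1: "Psi \<alpha> (M/s) = 0" using Psi_eq[OF s alpha_pos, of M] False M by simp
      show ?thesis unfolding PI_psi[OF M s] sym e1 using False by simp
    qed
    finally show ?thesis using xy by simp
  qed
qed

lemma Phi_chi:
  assumes a: "0 < a"
  shows "Phi (indicator {-a..a}) x y = indicator {-a..a} x * indicator {-a..a} y * (1 - (\<bar>x\<bar>/a) powr \<alpha> * (\<bar>y\<bar>/a) powr \<alpha>)"
proof -
  define M where "M = MM x y"
  define m where "m = mm x y"
  have mM: "0 \<le> m" "m \<le> M" unfolding M_def m_def MM_def mm_def by auto
  have ind: "indicator {-a..a} z = (if \<bar>z\<bar> \<le> a then 1 else (0::real))" for z
    by (auto simp: indicator_def abs_le_iff)
  have xy: "indicator {-a..a} x * indicator {-a..a} y * (1 - (\<bar>x\<bar>/a) powr \<alpha> * (\<bar>y\<bar>/a) powr \<alpha>)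
     = (if M \<le> a then 1 - (M/a) powr \<alpha> * (m/a) powr \<alpha> else 0)"
    unfolding M_def m_def MM_def mm_def ind by (auto simp: max_def min_def)
  show ?thesis
  proof (cases "M = 0")
    case True
    then have "m = 0" using mM by simp
    then show ?thesis using True xy alpha_pos a unfolding Phi_def M_def[symmetric] cc_def by simp
  next
    case False
    then have M: "0 < M" using mM by simp
    define c where "c = (m/M) powr \<alpha>"
    define W where "W = (M/a) powr \<alpha>"
    have cc: "cc \<alpha> x y = c" unfolding cc_def c_def M_def m_def using False M_def by simp
    have cw: "c * W = (m/a) powr \<alpha>"
      unfolding c_def W_def using M a mM by (simp add: powr_mult[symmetric])
    have W2: "(M/a) powr (2*\<alpha>) = W^2"
      unfolding W_def using powr_add[of "M/a" \<alpha> \<alpha>] by (simp add: power2_eq_square)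
    have "Phi (indicator {-a..a}) x y = c * (\<integral>u. indicator {-a..a} (M*u) \<partial>PI) + (1 - c)/2 * (indicator {-a..a} M + indicator {-a..a} (- M))"
      unfolding Phi_def cc M_def[symmetric] by simp
    also have "\<dots> = (if M \<le> a then 1 - (M/a) powr \<alpha> * (m/a) powr \<alpha> else 0)"
      unfolding PI_chi[OF M a] unfolding W2 ind using M cw[symmetric] W_def
      by (auto simp: power2_eq_square field_simps)
    finally show ?thesis using xy by simp
  qed
qed

lemma K_psi:
  assumes s: "0 < s"
  shows "(\<integral>z. Psi \<alpha> (z/s) \<partial>K x) = Psi \<alpha> (x/s) * funG \<alpha> \<nu> s"
proof -
  have "(\<integral>z. Psi \<alpha> (z/s) \<partial>K x) = (\<integral>y. Phi (\<lambda>z. Psi \<alpha> (z/s)) x y \<partial>\<nu>)"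
    by (rule K_int[where B=1]) (use Psi_bounds in auto)
  also have "\<dots> = (\<integral>y. Psi \<alpha> (x/s) * Psi \<alpha> (y/s) \<partial>\<nu>)" by (simp add: Phi_psi[OF s])
  also have "\<dots> = Psi \<alpha> (x/s) * funG \<alpha> \<nu> s" unfolding funG_def by simp
  finally show ?thesis .
qed

lemma nu_interval:
  assumes a: "0 \<le> a"
  shows "measure \<nu> {-a..a} = 2 * distF \<nu> a - 1"
proof -
  interpret N: prob_space \<nu> by (rule prob_nu)
  have "measure \<nu> {..a} = measure \<nu> ({..<-a} \<union> {-a..a})"
    using a by (intro arg_cong[where f="measure \<nu>"]) auto
  also have "\<dots> = measure \<nu> {..<-a} + measure \<nu> {-a..a}"
    by (rule N.finite_measure_Union) (auto simp: sets_nu)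
  also have "measure \<nu> {..<-a} = measure \<nu> {a<..}"
  proof -
    have "measure \<nu> {a<..} = measure (distr \<nu> borel uminus) {a<..}" by (simp add: nu_distr_uminus)
    also have "\<dots> = measure \<nu> (uminus -` {a<..} \<inter> space \<nu>)"
      by (rule measure_distr) (auto simp: sets_nu)
    also have "uminus -` {a<..} \<inter> space \<nu> = {..<-a}" by auto
    finally show ?thesis by simp
  qed
  also have "measure \<nu> {a<..} = 1 - measure \<nu> {..a}"
  proof -
    have "measure \<nu> (space \<nu> - {..a}) = 1 - measure \<nu> {..a}"
      by (rule N.prob_compl) (auto simp: sets_nu)
    moreover have "space \<nu> - {..a} = {a<..}" by auto
    ultimately show ?thesis by simp
  qed
  finally show ?thesis unfolding distF_def by simp
qed

lemma K_chi:
  assumes a: "0 < a"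
  shows "(\<integral>z. indicator {-a..a} z \<partial>K x) = funG \<alpha> \<nu> a * indicator {-a..a} x + funH \<alpha> \<nu> a * Psi \<alpha> (x/a)"
proof -
  interpret N: prob_space \<nu> by (rule prob_nu)
  define X where "X = (\<bar>x\<bar>/a) powr \<alpha>"
  define ch where "ch z = (indicator {-a..a} z :: real)" for z
  have chm[measurable]: "ch \<in> borel_measurable borel" unfolding ch_def by simp
  have psi_ch: "Psi \<alpha> (z/a) = ch z - ch z * (\<bar>z\<bar>/a) powr \<alpha>" for z
    using Psi_eq[OF a alpha_pos, of z] unfolding ch_def by (auto simp: indicator_def abs_le_iff)
  have i1: "integrable \<nu> ch"
    by (rule N.integrable_const_bound[where B=1]) (auto simp: ch_def indicator_def)
  have i2: "integrable \<nu> (\<lambda>y. ch y * (\<bar>y\<bar>/a) powr \<alpha>)"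
  proof (rule N.integrable_const_bound[where B=1])
    show "AE y in \<nu>. norm (ch y * (\<bar>y\<bar>/a) powr \<alpha>) \<le> 1"
      using a alpha_pos by (auto simp: ch_def indicator_def abs_le_iff intro!: powr_le1)
  qed measurable
  have Ich: "(\<integral>y. ch y \<partial>\<nu>) = 2 * distF \<nu> a - 1"
    unfolding ch_def using nu_interval[of a] a by simp
  have G: "funG \<alpha> \<nu> a = (2 * distF \<nu> a - 1) - (\<integral>y. ch y * (\<bar>y\<bar>/a) powr \<alpha> \<partial>\<nu>)"
    unfolding funG_def psi_ch using i1 i2 Ich by simp
  have "(\<integral>z. indicator {-a..a} z \<partial>K x) = (\<integral>y. Phi (indicator {-a..a}) x y \<partial>\<nu>)"
    by (rule K_int[where B=1]) (auto simp: indicator_def)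
  also have "\<dots> = (\<integral>y. ch x * (ch y - X * (ch y * (\<bar>y\<bar>/a) powr \<alpha>)) \<partial>\<nu>)"
    unfolding Phi_chi[OF a] ch_def X_def by (simp add: algebra_simps)
  also have "\<dots> = ch x * ((\<integral>y. ch y \<partial>\<nu>) - X * (\<integral>y. ch y * (\<bar>y\<bar>/a) powr \<alpha> \<partial>\<nu>))"
    using i1 i2 by simp
  also have "\<dots> = funG \<alpha> \<nu> a * ch x + funH \<alpha> \<nu> a * (ch x - ch x * X)"
    unfolding Ich funH_def G by (simp add: algebra_simps)
  also have "ch x - ch x * X = Psi \<alpha> (x/a)" unfolding psi_ch X_def ..
  finally show ?thesis unfolding ch_def .
qed

lemma K_even:
  fixes f :: "real \<Rightarrow> real"
  assumes f[measurable]: "f \<in> borel_measurable borel" and B: "\<And>z. \<bar>f z\<bar> \<le> B"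
  shows "(\<integral>z. f z \<partial>K x) = (\<integral>z. (f z + f (-z))/2 \<partial>K x)"
proof -
  interpret PIp: prob_space PI by (rule prob_PI)
  have B2: "\<bar>(f z + f (-z))/2\<bar> \<le> B" for z using B[of z] B[of "-z"] by auto
  have "Phi f x y = Phi (\<lambda>z. (f z + f (-z))/2) x y" for y
  proof -
    let ?M = "MM x y"
    have i1: "integrable PI (\<lambda>u. f (?M * u))"
      by (rule PIp.integrable_const_bound[where B=B]) (auto simp: B)
    have i2: "integrable PI (\<lambda>u. f (- (?M * u)))"
      by (rule PIp.integrable_const_bound[where B=B]) (auto simp: B)
    have "(\<integral>u. f (- (?M * u)) \<partial>PI) = (\<integral>u. f (?M * u) \<partial>PI)"
      using PI_sym_integral[of "\<lambda>u. f (?M * u)"] by simp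
    then have "(\<integral>u. (f (?M * u) + f (- (?M * u)))/2 \<partial>PI) = (\<integral>u. f (?M * u) \<partial>PI)"
      using i1 i2 by simp
    then show ?thesis unfolding Phi_def by (simp add: field_simps)
  qed
  then show ?thesis
    using K_int[OF f B] K_int[of "\<lambda>z. (f z + f (-z))/2" B, OF _ B2] by simp
qed

lemma nu_even:
  fixes f :: "real \<Rightarrow> real"
  assumes f[measurable]: "f \<in> borel_measurable borel" and B: "\<And>z. \<bar>f z\<bar> \<le> B"
  shows "(\<integral>z. f z \<partial>\<nu>) = (\<integral>z. (f z + f (-z))/2 \<partial>\<nu>)"
proof -
  interpret N: prob_space \<nu> by (rule prob_nu)
  have i1: "integrable \<nu> f"
    by (rule N.integrable_const_bound[where B=B]) (auto simp: B)
  have i2: "integrable \<nu> (\<lambda>z. f (-z))"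
    by (rule N.integrable_const_bound[where B=B]) (auto simp: B)
  show ?thesis using nu_sym_integral[OF f] i1 i2 by simp
qed

end




context kendall
begin

lemma even_id:
  assumes a: "0 < a" and at: "a \<le> t"
  shows "(indicator {..a} z * (p * Psi \<alpha> (z/t) + q * indicator {-a..a} z + r * Psi \<alpha> (z/a))
        + indicator {..a} (-z) * (p * Psi \<alpha> (-z/t) + q * indicator {-a..a} (-z) + r * Psi \<alpha> (-z/a)))/2
     = p/2 * Psi \<alpha> (z/t) + (Psi \<alpha> (a/t)/2 * p + q) * indicator {-a..a} z + ((1 - Psi \<alpha> (a/t))/2 * p + r) * Psi \<alpha> (z/a)"
proof -
  have t: "0 < t" using a at by simp
  have s1: "Psi \<alpha> (-z/t) = Psi \<alpha> (z/t)" "Psi \<alpha> (-z/a) = Psi \<alpha> (z/a)"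
    by (subst (1 2) Psi_abs, simp)+
  have s2: "(indicator {-a..a} (-z) :: real) = indicator {-a..a} z" by (auto simp: indicator_def)
  have P: "Psi \<alpha> (a/t) = 1 - (a/t) powr \<alpha>" using Psi_eq[OF t alpha_pos, of a] a at by simp
  show ?thesis
  proof (cases "\<bar>z\<bar> \<le> a")
    case True
    have i: "(indicator {..a} z :: real) = 1" "(indicator {..a} (-z) :: real) = 1" "(indicator {-a..a} z :: real) = 1"
      using True by (auto simp: indicator_def abs_le_iff)
    have pa: "Psi \<alpha> (z/a) = 1 - (\<bar>z\<bar>/a) powr \<alpha>" using Psi_eq[OF a alpha_pos, of z] True by simp
    have pt: "Psi \<alpha> (z/t) = 1 - (\<bar>z\<bar>/t) powr \<alpha>" using Psi_eq[OF t alpha_pos, of z] True at by simp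
    have m: "(\<bar>z\<bar>/t) powr \<alpha> = (a/t) powr \<alpha> * (\<bar>z\<bar>/a) powr \<alpha>"
      using a t by (simp add: powr_mult[symmetric])
    show ?thesis unfolding s1 s2 i pa pt P m by (simp add: field_simps)
  next
    case False
    have i: "(indicator {-a..a} z :: real) = 0" using False by (auto simp: indicator_def abs_le_iff)
    have pa: "Psi \<alpha> (z/a) = 0" using Psi_eq[OF a alpha_pos, of z] False by simp
    have j: "(indicator {..a} z :: real) + indicator {..a} (-z) = 1"
      using False a by (auto simp: indicator_def abs_le_iff)
    have "(indicator {..a} z * (p * Psi \<alpha> (z/t)) + indicator {..a} (-z) * (p * Psi \<alpha> (z/t)))/2
        = (indicator {..a} z + indicator {..a} (-z)) * (p * Psi \<alpha> (z/t)) / 2"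
      by (simp add: algebra_simps)
    then show ?thesis unfolding s1 s2 i pa j by simp
  qed
qed

lemma inner_form:
  assumes a: "0 < a" and at: "a \<le> t"
  shows "kendall_inner \<alpha> \<nu> a t k x =
    (case cf (funG \<alpha> \<nu> t) (funG \<alpha> \<nu> a) (funH \<alpha> \<nu> a) (Psi \<alpha> (a/t)) k of (p, q, r) \<Rightarrow>
       p * Psi \<alpha> (x/t) + q * indicator {-a..a} x + r * Psi \<alpha> (x/a))"
proof (induction k arbitrary: x)
  case 0
  then show ?case by simp
next
  case (Suc k)
  have t: "0 < t" using a at by simp
  define Gt where "Gt = funG \<alpha> \<nu> t"
  define Ga where "Ga = funG \<alpha> \<nu> a"
  define Ha where "Ha = funH \<alpha> \<nu> a"
  define P where "P = Psi \<alpha> (a/t)"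
  obtain p q r where cfk: "cf Gt Ga Ha P k = (p, q, r)" by (cases "cf Gt Ga Ha P k") auto
  define gg where "gg z = p * Psi \<alpha> (z/t) + q * indicator {-a..a} z + r * Psi \<alpha> (z/a)" for z
  have IH: "kendall_inner \<alpha> \<nu> a t k z = gg z" for z
    using Suc.IH[of z] cfk unfolding gg_def Gt_def Ga_def Ha_def P_def by simp
  interpret Kp: prob_space "K x" by (rule prob_K)
  have ggm[measurable]: "gg \<in> borel_measurable borel" unfolding gg_def by measurable
  have bnd: "\<bar>indicator {..a} z * gg z\<bar> \<le> \<bar>p\<bar> + \<bar>q\<bar> + \<bar>r\<bar>" for z
  proof -
    have b1: "\<bar>p * Psi \<alpha> (z/t)\<bar> \<le> \<bar>p\<bar>" using Psi_bounds[of \<alpha> "z/t"]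
      by (simp add: abs_mult mult_left_le)
    have b3: "\<bar>r * Psi \<alpha> (z/a)\<bar> \<le> \<bar>r\<bar>" using Psi_bounds[of \<alpha> "z/a"]
      by (simp add: abs_mult mult_left_le)
    have b2: "\<bar>q * indicator {-a..a} z\<bar> \<le> \<bar>q\<bar>" by (simp add: abs_mult indicator_def)
    have "\<bar>gg z\<bar> \<le> \<bar>p\<bar> + \<bar>q\<bar> + \<bar>r\<bar>"
      unfolding gg_def
      using b1 b2 b3 abs_triangle_ineq[of "p * Psi \<alpha> (z/t)" "q * indicator {-a..a} z"]
        abs_triangle_ineq[of "p * Psi \<alpha> (z/t) + q * indicator {-a..a} z" "r * Psi \<alpha> (z/a)"]
      by linarith
    then show ?thesis by (auto simp: indicator_def)
  qed
  have ib: "integrable (K x) (\<lambda>z. Psi \<alpha> (z/s))" for s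
    by (rule Kp.integrable_const_bound[where B=1]) (use Psi_bounds in auto)
  have ic: "integrable (K x) (\<lambda>z. indicator {-a..a} z :: real)"
    by (rule Kp.integrable_const_bound[where B=1]) (auto simp: indicator_def)
  have "kendall_inner \<alpha> \<nu> a t (Suc k) x = (\<integral>y. indicator {..a} y * gg y \<partial>K x)"
    by (simp add: kernel_K IH)
  also have "\<dots> = (\<integral>z. (indicator {..a} z * gg z + indicator {..a} (-z) * gg (-z))/2 \<partial>K x)"
    by (rule K_even[OF _ bnd]) measurable
  also have "\<dots> = (\<integral>z. p/2 * Psi \<alpha> (z/t) + (P/2 * p + q) * indicator {-a..a} z + ((1 - P)/2 * p + r) * Psi \<alpha> (z/a) \<partial>K x)"
    unfolding gg_def P_def by (subst even_id[OF a at]) (simp add: minus_divide_left)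
  also have "\<dots> = p/2 * (\<integral>z. Psi \<alpha> (z/t) \<partial>K x) + (P/2 * p + q) * (\<integral>z. indicator {-a..a} z \<partial>K x)
      + ((1 - P)/2 * p + r) * (\<integral>z. Psi \<alpha> (z/a) \<partial>K x)"
    using ib[of t] ib[of a] ic by simp
  also have "\<dots> = p/2 * (Psi \<alpha> (x/t) * Gt) + (P/2 * p + q) * (Ga * indicator {-a..a} x + Ha * Psi \<alpha> (x/a))
      + ((1 - P)/2 * p + r) * (Psi \<alpha> (x/a) * Ga)"
    unfolding K_psi[OF t] K_psi[OF a] K_chi[OF a] Gt_def Ga_def Ha_def ..
  also have "\<dots> = (case cf Gt Ga Ha P (Suc k) of (p, q, r) \<Rightarrow>
       p * Psi \<alpha> (x/t) + q * indicator {-a..a} x + r * Psi \<alpha> (x/a))"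
    using cfk by (simp add: algebra_simps)
  finally show ?case unfolding Gt_def Ga_def Ha_def P_def .
qed

lemma I_form:
  assumes a: "0 < a" and at: "a \<le> t" and n: "1 \<le> n"
    and cfe: "cf (funG \<alpha> \<nu> t) (funG \<alpha> \<nu> a) (funH \<alpha> \<nu> a) (Psi \<alpha> (a/t)) (n-1) = (p, q, r)"
  shows "kendall_I \<alpha> \<nu> n a t = p/2 * funG \<alpha> \<nu> t + (Psi \<alpha> (a/t)/2 * p + q) * (funG \<alpha> \<nu> a + funH \<alpha> \<nu> a)
     + ((1 - Psi \<alpha> (a/t))/2 * p + r) * funG \<alpha> \<nu> a"
proof -
  have t: "0 < t" using a at by simp
  interpret N: prob_space \<nu> by (rule prob_nu)
  define P where "P = Psi \<alpha> (a/t)"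
  define gg where "gg z = p * Psi \<alpha> (z/t) + q * indicator {-a..a} z + r * Psi \<alpha> (z/a)" for z
  have inn: "kendall_inner \<alpha> \<nu> a t (n-1) z = gg z" for z
    using inner_form[OF a at, of "n-1" z] cfe unfolding gg_def by simp
  have ggm[measurable]: "gg \<in> borel_measurable borel" unfolding gg_def by measurable
  have bnd: "\<bar>indicator {..a} z * gg z\<bar> \<le> \<bar>p\<bar> + \<bar>q\<bar> + \<bar>r\<bar>" for z
  proof -
    have b1: "\<bar>p * Psi \<alpha> (z/t)\<bar> \<le> \<bar>p\<bar>" using Psi_bounds[of \<alpha> "z/t"]
      by (simp add: abs_mult mult_left_le)
    have b3: "\<bar>r * Psi \<alpha> (z/a)\<bar> \<le> \<bar>r\<bar>" using Psi_bounds[of \<alpha> "z/a"]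
      by (simp add: abs_mult mult_left_le)
    have b2: "\<bar>q * indicator {-a..a} z\<bar> \<le> \<bar>q\<bar>" by (simp add: abs_mult indicator_def)
    have "\<bar>gg z\<bar> \<le> \<bar>p\<bar> + \<bar>q\<bar> + \<bar>r\<bar>"
      unfolding gg_def
      using b1 b2 b3 abs_triangle_ineq[of "p * Psi \<alpha> (z/t)" "q * indicator {-a..a} z"]
        abs_triangle_ineq[of "p * Psi \<alpha> (z/t) + q * indicator {-a..a} z" "r * Psi \<alpha> (z/a)"]
      by linarith
    then show ?thesis by (auto simp: indicator_def)
  qed
  have ib: "integrable \<nu> (\<lambda>z. Psi \<alpha> (z/s))" for s
    by (rule N.integrable_const_bound[where B=1]) (use Psi_bounds in auto)
  have ic: "integrable \<nu> (\<lambda>z. indicator {-a..a} z :: real)"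
    by (rule N.integrable_const_bound[where B=1]) (auto simp: indicator_def)
  have Ich: "(\<integral>z. indicator {-a..a} z \<partial>\<nu>) = funG \<alpha> \<nu> a + funH \<alpha> \<nu> a"
    using nu_interval[of a] a unfolding funH_def by simp
  have "kendall_I \<alpha> \<nu> n a t = (\<integral>z. indicator {..a} z * gg z \<partial>\<nu>)"
    unfolding kendall_I_def inn ..
  also have "\<dots> = (\<integral>z. (indicator {..a} z * gg z + indicator {..a} (-z) * gg (-z))/2 \<partial>\<nu>)"
    by (rule nu_even[OF _ bnd]) measurable
  also have "\<dots> = (\<integral>z. p/2 * Psi \<alpha> (z/t) + (P/2 * p + q) * indicator {-a..a} z + ((1 - P)/2 * p + r) * Psi \<alpha> (z/a) \<partial>\<nu>)"
    unfolding gg_def P_def by (subst even_id[OF a at]) (simp add: minus_divide_left)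
  also have "\<dots> = p/2 * (\<integral>z. Psi \<alpha> (z/t) \<partial>\<nu>) + (P/2 * p + q) * (\<integral>z. indicator {-a..a} z \<partial>\<nu>)
      + ((1 - P)/2 * p + r) * (\<integral>z. Psi \<alpha> (z/a) \<partial>\<nu>)"
    using ib[of t] ib[of a] ic by simp
  finally show ?thesis unfolding Ich funG_def[symmetric] P_def .
qed

end



theorem mainTheorem7:
  fixes \<alpha> a t :: real and \<nu> :: "real measure"
  assumes "\<alpha> > 0"
    and "sym_prob \<nu>"
    and "measure \<nu> {0} = 0"
    and "0 < a" and "a \<le> t"
    and "measure \<nu> {a} = 0" and "measure \<nu> {t} = 0"
    and "funG \<alpha> \<nu> t \<noteq> 2 * funG \<alpha> \<nu> a"
  shows "(kendall_I \<alpha> \<nu> 1 a t =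
           funG \<alpha> \<nu> t / 2 + funH \<alpha> \<nu> a * Psi \<alpha> (a / t) / 2 + funG \<alpha> \<nu> a / 2) \<and>
         (\<forall>n::nat. n \<ge> 2 \<longrightarrow>
           (let Gt = funG \<alpha> \<nu> t; Ga = funG \<alpha> \<nu> a; Ha = funH \<alpha> \<nu> a; P = Psi \<alpha> (a / t);
                D = 2 * Ga - Gt;
                C1 = kendall_I \<alpha> \<nu> 1 a t - Ga / D * (Ga + Ha * P * (1 - Gt / D));
                C2 = Ha * P / D;
                C3 = (Ha * P + Ga) / D - 2 * Ha * Ga * P / D^2
            in kendall_I \<alpha> \<nu> n a t = C1 * (Gt / 2) ^ (n - 1) + Ga ^ n * (C2 * real n + C3)))"
proof -
  interpret kendall \<alpha> \<nu> by unfold_locales (use assms(1,2) in auto)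
  have a: "0 < a" and at: "a \<le> t" using assms by auto
  have I1: "kendall_I \<alpha> \<nu> 1 a t = funG \<alpha> \<nu> t / 2 + funH \<alpha> \<nu> a * Psi \<alpha> (a / t) / 2 + funG \<alpha> \<nu> a / 2"
  proof -
    have "cf (funG \<alpha> \<nu> t) (funG \<alpha> \<nu> a) (funH \<alpha> \<nu> a) (Psi \<alpha> (a/t)) (1-1) = (1, 0, 0)" by simp
    from I_form[OF a at _ this] show ?thesis by (simp add: field_simps)
  qed
  have D: "2 * funG \<alpha> \<nu> a - funG \<alpha> \<nu> t \<noteq> 0" using assms(8) by simp
  have rest: "\<forall>n::nat. n \<ge> 2 \<longrightarrow>
           (let Gt = funG \<alpha> \<nu> t; Ga = funG \<alpha> \<nu> a; Ha = funH \<alpha> \<nu> a; P = Psi \<alpha> (a / t);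
                D = 2 * Ga - Gt;
                C1 = kendall_I \<alpha> \<nu> 1 a t - Ga / D * (Ga + Ha * P * (1 - Gt / D));
                C2 = Ha * P / D;
                C3 = (Ha * P + Ga) / D - 2 * Ha * Ga * P / D^2
            in kendall_I \<alpha> \<nu> n a t = C1 * (Gt / 2) ^ (n - 1) + Ga ^ n * (C2 * real n + C3))"
  proof (intro allI impI)
    fix n :: nat assume n: "2 \<le> n"
    obtain p q r where cfe: "cf (funG \<alpha> \<nu> t) (funG \<alpha> \<nu> a) (funH \<alpha> \<nu> a) (Psi \<alpha> (a/t)) (n-1) = (p, q, r)"
      by (cases "cf (funG \<alpha> \<nu> t) (funG \<alpha> \<nu> a) (funH \<alpha> \<nu> a) (Psi \<alpha> (a/t)) (n-1)") auto
    have "kendall_I \<alpha> \<nu> n a t = p/2 * funG \<alpha> \<nu> t + (Psi \<alpha> (a/t)/2 * p + q) * (funG \<alpha> \<nu> a + funH \<alpha> \<nu> a)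
     + ((1 - Psi \<alpha> (a/t))/2 * p + r) * funG \<alpha> \<nu> a"
      using I_form[OF a at _ cfe] n by simp
    also have "\<dots> = (let I1 = funG \<alpha> \<nu> t / 2 + funH \<alpha> \<nu> a * Psi \<alpha> (a/t) / 2 + funG \<alpha> \<nu> a / 2;
                D = 2 * funG \<alpha> \<nu> a - funG \<alpha> \<nu> t;
                C1 = I1 - funG \<alpha> \<nu> a / D * (funG \<alpha> \<nu> a + funH \<alpha> \<nu> a * Psi \<alpha> (a/t) * (1 - funG \<alpha> \<nu> t / D));
                C2 = funH \<alpha> \<nu> a * Psi \<alpha> (a/t) / D;
                C3 = (funH \<alpha> \<nu> a * Psi \<alpha> (a/t) + funG \<alpha> \<nu> a) / D - 2 * funH \<alpha> \<nu> a * funG \<alpha> \<nu> a * Psi \<alpha> (a/t) / D^2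
            in C1 * (funG \<alpha> \<nu> t / 2) ^ (n - 1) + funG \<alpha> \<nu> a ^ n * (C2 * real n + C3))"
      by (rule final_alg[OF D n cfe])
    finally show "let Gt = funG \<alpha> \<nu> t; Ga = funG \<alpha> \<nu> a; Ha = funH \<alpha> \<nu> a; P = Psi \<alpha> (a / t);
                D = 2 * Ga - Gt;
                C1 = kendall_I \<alpha> \<nu> 1 a t - Ga / D * (Ga + Ha * P * (1 - Gt / D));
                C2 = Ha * P / D;
                C3 = (Ha * P + Ga) / D - 2 * Ha * Ga * P / D^2
            in kendall_I \<alpha> \<nu> n a t = C1 * (Gt / 2) ^ (n - 1) + Ga ^ n * (C2 * real n + C3)"
      unfolding Let_def I1 .
  qed
  show ?thesis using I1 rest by blast
qed

end
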